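(* Let $P(z)=a_0z^n+a_1z^{n-1}+\dots+a_n$ with $a_j\in\mathbb{C}$, $a_0\neq 0$, $n\ge 1$, and define $f(r,\theta)=\frac{P'(re^{i\theta})}{P(re^{i\theta})}$ for $r\ge 0$, $\theta\in\mathbb{R}$ with $P(re^{i\theta})\neq 0$. Let $0<a<b$ and suppose the closed annulus $K(a,b)=\{z\in\mathbb{C}: a\le|z|\le b\}$ contains no root of $P$. Then $$\left|\frac{\partial}{\partial\theta}f(r,\theta)\right|\le \frac{9nb}{(b-a)^2}\qquad\text{for } r=a+k\tfrac{b-a}{3},\ k=1,2,\ \theta\in\mathbb{R}.$$
   Context: $P'$ denotes the derivative of $P$. *)

theory Defs
  imports "HOL-Analysis.Analysis" "HOL-Computational_Algebra.Polynomial"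
begin

definition logderiv_polar :: "complex poly \<Rightarrow> real \<Rightarrow> real \<Rightarrow> complex" where
  "logderiv_polar P r \<theta> =
     poly (pderiv P) (complex_of_real r * cis \<theta>) / poly P (complex_of_real r * cis \<theta>)"

end

theory Submission
  imports Defs "HOL-Computational_Algebra.Fundamental_Theorem_Algebra"
begin

lemma logderiv_prod:
  fixes \<rho> :: "nat \<Rightarrow> complex"
  assumes "poly (\<Prod>i<m. [:-\<rho> i, 1:]) z \<noteq> 0"
  shows "poly (pderiv (\<Prod>i<m. [:-\<rho> i, 1:])) z
          = poly (\<Prod>i<m. [:-\<rho> i, 1:]) z * (\<Sum>i<m. 1 / (z - \<rho> i))"
  using assms
proof (induction m)
  case 0
  then show ?case by simp
next
  case (Suc m)
  let ?q = "\<Prod>i<m. [:-\<rho> i, 1:]"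
  have ne: "poly ?q z \<noteq> 0" "z - \<rho> m \<noteq> 0" using Suc.prems by (auto simp: prod.lessThan_Suc)
  have IH: "poly (pderiv ?q) z = poly ?q z * (\<Sum>i<m. 1 / (z - \<rho> i))" using Suc.IH ne by simp
  have pd: "poly (pderiv (?q * [:-\<rho> m, 1:])) z = poly (pderiv ?q) z * (z - \<rho> m) + poly ?q z"
  proof -
    have l: "pderiv [:-\<rho> m, 1:] = 1" by (simp add: pderiv_pCons)
    have "pderiv (?q * [:-\<rho> m, 1:]) = ?q * 1 + [:-\<rho> m, 1:] * pderiv ?q"
      by (simp only: pderiv_mult l)
    hence "poly (pderiv (?q * [:-\<rho> m, 1:])) z = poly (?q * 1 + [:-\<rho> m, 1:] * pderiv ?q) z"
      by (rule arg_cong)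
    also have "\<dots> = poly (pderiv ?q) z * (z - \<rho> m) + poly ?q z"
      by (simp only: poly_add poly_mult) simp
    finally show ?thesis .
  qed
  show ?case
    unfolding prod.lessThan_Suc sum.lessThan_Suc pd poly_mult IH
    using ne by (simp add: field_simps)
qed

lemma prod_root:
  fixes \<rho> :: "nat \<Rightarrow> complex"
  assumes "j < m"
  shows "poly (\<Prod>i<m. [:-\<rho> i, 1:]) (\<rho> j) = 0"
  using assms by (simp add: poly_prod prod_zero_iff) blast

theorem lemma2p2:
  fixes P :: "complex poly" and n :: nat and a b r \<theta> :: real and k :: nat
  assumes "degree P = n" and "n \<ge> 1"
    and "0 < a" and "a < b"
    and "\<forall>z. a \<le> cmod z \<and> cmod z \<le> b \<longrightarrow> poly P z \<noteq> 0"
    and "k \<in> {1, 2}"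
    and "r = a + real k * (b - a) / 3"
  shows "cmod (vector_derivative (\<lambda>t. logderiv_polar P r t) (at \<theta>))
           \<le> 9 * real n * b / (b - a)^2"
proof -
  obtain \<rho> where dec: "smult (lead_coeff P) (\<Prod>i<degree P. [:-\<rho> i, 1:]) = P"
    using complex_poly_decompose' by blast
  define Q where "Q = (\<Prod>i<n. [:-\<rho> i, 1:])"
  have Pne: "P \<noteq> 0" using assms(1,2) by auto
  hence lc: "lead_coeff P \<noteq> 0" by simp
  have PQ: "P = smult (lead_coeff P) Q" using dec assms(1) Q_def by simp
  have rb: "a < r" "r < b" "r - a \<ge> (b - a) / 3" "b - r \<ge> (b - a) / 3"
    using assms(3,4,6,7) by (auto simp: field_simps)
  have rootfar: "cmod (w - \<rho> i) \<ge> (b - a) / 3" if "cmod w = r" "i < n" for w i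
  proof -
    have "poly P (\<rho> i) = lead_coeff P * poly Q (\<rho> i)" by (subst PQ) simp
    hence "poly P (\<rho> i) = 0" using prod_root[OF that(2), of \<rho>] Q_def by simp
    hence "cmod (\<rho> i) < a \<or> cmod (\<rho> i) > b" using assms(5) by force
    moreover have "cmod (w - \<rho> i) \<ge> \<bar>cmod w - cmod (\<rho> i)\<bar>"
      by (metis abs_norm_cancel norm_triangle_ineq3)
    ultimately show ?thesis using that(1) rb by auto
  qed
  define g where "g = (\<lambda>w. \<Sum>i<n. 1 / (w - \<rho> i))"
  have eq: "logderiv_polar P r t = g (complex_of_real r * cis t)" for t
  proof -
    let ?w = "complex_of_real r * cis t"
    have nw: "cmod ?w = r" using rb assms(3) by (simp add: norm_mult)
    have "poly P ?w \<noteq> 0" using assms(5) nw rb by auto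
    hence "poly Q ?w \<noteq> 0" using PQ by (metis poly_smult mult_zero_right)
    from logderiv_prod[OF this[unfolded Q_def]] this lc
    show ?thesis unfolding logderiv_polar_def g_def
      by (subst (1 2) PQ) (simp add: pderiv_smult Q_def)
  qed
  let ?w = "complex_of_real r * cis \<theta>"
  have nw: "cmod ?w = r" using rb assms(3) by (simp add: norm_mult)
  have wne: "?w - \<rho> i \<noteq> 0" if "i < n" for i
  proof
    assume "?w - \<rho> i = 0"
    hence "cmod (?w - \<rho> i) = 0" by simp
    with rootfar[OF nw that] rb(1,2) show False by (smt (verit) divide_pos_pos)
  qed
  have wne': "?w \<noteq> \<rho> i" if "i < n" for i using wne[OF that] by simp
  have D1: "((\<lambda>t. complex_of_real r * cis t) has_vector_derivative (\<i> * ?w)) (at \<theta>)"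
    unfolding has_vector_derivative_def
    by (auto intro!: derivative_eq_intros simp: algebra_simps)
  have D2: "(g has_field_derivative (\<Sum>i<n. - 1 / (?w - \<rho> i)^2)) (at ?w)"
    unfolding g_def
    by (auto intro!: derivative_eq_intros sum.cong simp: wne wne' power2_eq_square divide_simps)
  have D: "((\<lambda>t. logderiv_polar P r t) has_vector_derivative
            (\<i> * ?w * (\<Sum>i<n. - 1 / (?w - \<rho> i)^2))) (at \<theta>)"
    using field_vector_diff_chain_at[OF D1 D2] by (simp add: eq o_def)
  have "cmod (\<i> * ?w * (\<Sum>i<n. - 1 / (?w - \<rho> i)^2))
        \<le> r * (\<Sum>i<n. cmod (1 / (?w - \<rho> i)^2))"
  proof -
    have "cmod (\<Sum>i<n. - 1 / (?w - \<rho> i)^2) \<le> (\<Sum>i<n. cmod (- 1 / (?w - \<rho> i)^2))"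
      by (rule norm_sum)
    also have "\<dots> = (\<Sum>i<n. cmod (1 / (?w - \<rho> i)^2))"
      by (simp add: norm_divide)
    finally have "cmod (\<Sum>i<n. - 1 / (?w - \<rho> i)^2) \<le> (\<Sum>i<n. cmod (1 / (?w - \<rho> i)^2))" .
    thus ?thesis using nw rb assms(3) by (simp add: norm_mult mult_left_mono)
  qed
  also have "\<dots> \<le> b * (\<Sum>i<n::nat. 9 / (b - a)^2)"
  proof (rule mult_mono)
    show "(\<Sum>i<n. cmod (1 / (?w - \<rho> i)^2)) \<le> (\<Sum>i<n::nat. 9 / (b - a)^2)"
    proof (rule sum_mono)
      fix i assume "i \<in> {..<n}"
      hence h: "cmod (?w - \<rho> i) \<ge> (b - a) / 3" using rootfar[OF nw] by auto
      have "((b - a) / 3)^2 \<le> cmod (?w - \<rho> i)^2"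
        using h rb by (intro power_mono) auto
      moreover have "((b - a) / 3)^2 = (b-a)^2 / 9" by (simp add: power_divide)
      ultimately have "(b-a)^2 / 9 \<le> cmod (?w - \<rho> i)^2" by simp
      moreover have "(b-a)^2 / 9 > 0" using rb by simp
      ultimately have "1 / cmod (?w - \<rho> i)^2 \<le> 1 / ((b-a)^2 / 9)"
        by (intro divide_left_mono mult_pos_pos) auto
      thus "cmod (1 / (?w - \<rho> i)^2) \<le> 9 / (b - a)^2"
        by (simp add: norm_divide norm_power)
    qed
  qed (use rb assms(3) in \<open>auto intro: sum_nonneg\<close>)
  also have "\<dots> = 9 * real n * b / (b - a)^2" by simp
  finally show ?thesis using vector_derivative_at[OF D] by simp
qed

end
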